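(* Let $G=(V,E)$ be an undirected graph with non-negative edge weights, let $S\subseteq V$ be non-empty, let $u,v\in V$ and let $P(u,v)$ be a shortest path between $u$ and $v$ in $G$. If $P(u,v)$ is not contained in $G_S$, then $\max(h_S(u),h_S(v))\le d_G(u,v)$.
   Context: $d_G(u,v)$ is the shortest-path distance in $G$; $h_S(u)=\min_{s\in S}d_G(u,s)$. For $v\in V$, $E_S(v)$ is the set of edges incident to $v$ whose weight is at most $h_S(v)$; $E_S=\bigcup_{v\in V}E_S(v)$ and $G_S=(V,E_S)$. "$P(u,v)$ is contained in $G_S$" means every edge of $P(u,v)$ is in $E_S$. *)

theory Defs
  imports "HOL-Library.Extended_Real"
begin

definition wgraph :: "'a set \<Rightarrow> 'a set set \<Rightarrow> ('a set \<Rightarrow> real) \<Rightarrow> bool" where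
  "wgraph V E w \<longleftrightarrow> finite V \<and> (\<forall>e\<in>E. \<exists>x y. e = {x, y} \<and> x \<in> V \<and> y \<in> V \<and> x \<noteq> y)"

definition path_edges :: "'a list \<Rightarrow> 'a set set" where
  "path_edges p = {{a, b} | a b. (a, b) \<in> set (zip p (tl p))}"

definition is_path :: "'a set \<Rightarrow> 'a set set \<Rightarrow> 'a \<Rightarrow> 'a \<Rightarrow> 'a list \<Rightarrow> bool" where
  "is_path V E u v p \<longleftrightarrow> p \<noteq> [] \<and> hd p = u \<and> last p = v \<and> distinct p \<and>
     set p \<subseteq> V \<and> path_edges p \<subseteq> E"

definition path_weight :: "('a set \<Rightarrow> real) \<Rightarrow> 'a list \<Rightarrow> real" where
  "path_weight w p = (\<Sum>(a, b)\<leftarrow>zip p (tl p). w {a, b})"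

text \<open>Shortest-path distance d_G(u,v); \<infinity> if no path exists.\<close>
definition gdist :: "'a set \<Rightarrow> 'a set set \<Rightarrow> ('a set \<Rightarrow> real) \<Rightarrow> 'a \<Rightarrow> 'a \<Rightarrow> ereal" where
  "gdist V E w u v = (INF p \<in> {p. is_path V E u v p}. ereal (path_weight w p))"

definition shortest_path :: "'a set \<Rightarrow> 'a set set \<Rightarrow> ('a set \<Rightarrow> real) \<Rightarrow> 'a \<Rightarrow> 'a \<Rightarrow> 'a list \<Rightarrow> bool" where
  "shortest_path V E w u v p \<longleftrightarrow> is_path V E u v p \<and> ereal (path_weight w p) = gdist V E w u v"

definition hS :: "'a set \<Rightarrow> 'a set set \<Rightarrow> ('a set \<Rightarrow> real) \<Rightarrow> 'a set \<Rightarrow> 'a \<Rightarrow> ereal" where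
  "hS V E w S u = (INF s \<in> S. gdist V E w u s)"

definition ES_v :: "'a set \<Rightarrow> 'a set set \<Rightarrow> ('a set \<Rightarrow> real) \<Rightarrow> 'a set \<Rightarrow> 'a \<Rightarrow> 'a set set" where
  "ES_v V E w S v = {e \<in> E. v \<in> e \<and> ereal (w e) \<le> hS V E w S v}"

definition ES :: "'a set \<Rightarrow> 'a set set \<Rightarrow> ('a set \<Rightarrow> real) \<Rightarrow> 'a set \<Rightarrow> 'a set set" where
  "ES V E w S = (\<Union>v\<in>V. ES_v V E w S v)"

end

theory Submission
  imports Defs
begin

lemma pw_simps[simp]:
  "path_weight w [] = 0" "path_weight w [a] = 0"
  "path_weight w (a # b # r) = w {a, b} + path_weight w (b # r)"
  by (simp_all add: path_weight_def)

lemma pe_simps[simp]: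
  "path_edges [] = {}" "path_edges [a] = {}"
  "path_edges (a # b # r) = insert {a, b} (path_edges (b # r))"
  by (auto simp: path_edges_def)

lemma pw_append: "path_weight w (xs @ y # ys) = path_weight w (xs @ [y]) + path_weight w (y # ys)"
proof (induction xs)
  case Nil then show ?case by simp
next
  case (Cons a xs)
  then show ?case by (cases xs) auto
qed

lemma pe_append: "path_edges (xs @ y # ys) = path_edges (xs @ [y]) \<union> path_edges (y # ys)"
proof (induction xs)
  case Nil then show ?case by simp
next
  case (Cons a xs)
  then show ?case by (cases xs) auto
qed

lemma pw_nonneg: "\<forall>e\<in>E. 0 \<le> w e \<Longrightarrow> path_edges p \<subseteq> E \<Longrightarrow> 0 \<le> path_weight w p"
proof (induction p)
  case Nil then show ?case by simp
next
  case (Cons a p)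
  then show ?case by (cases p) auto
qed

lemma pw_rev: "path_weight w (rev p) = path_weight w p"
proof (induction p)
  case Nil then show ?case by simp
next
  case (Cons a p)
  show ?case
  proof (cases p)
    case Nil then show ?thesis by simp
  next
    case (Cons b r)
    have "path_weight w (rev (a # p)) = path_weight w (rev r @ b # [a])" using Cons by simp
    also have "\<dots> = path_weight w (rev r @ [b]) + w {b, a}" by (subst pw_append) simp
    also have "\<dots> = path_weight w p + w {a, b}" using Cons \<open>path_weight w (rev p) = _\<close>
      by (simp add: insert_commute)
    finally show ?thesis using Cons by simp
  qed
qed

lemma pe_rev: "path_edges (rev p) = path_edges p"
proof (induction p)
  case Nil then show ?case by simp
next
  case (Cons a p)
  show ?case
  proof (cases p)
    case Nil then show ?thesis by simp
  next
    case (Cons b r)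
    have "path_edges (rev (a # p)) = path_edges (rev r @ b # [a])" using Cons by simp
    also have "\<dots> = path_edges (rev r @ [b]) \<union> {{b, a}}" by (subst pe_append) simp
    also have "\<dots> = path_edges p \<union> {{a, b}}" using Cons \<open>path_edges (rev p) = _\<close>
      by (simp add: insert_commute)
    finally show ?thesis using Cons by auto
  qed
qed

lemma zip_decomp: "(a, b) \<in> set (zip p (tl p)) \<Longrightarrow> \<exists>xs ys. p = xs @ a # b # ys"
proof (induction p)
  case Nil then show ?case by simp
next
  case (Cons c p)
  show ?case
  proof (cases p)
    case Nil then show ?thesis using Cons by simp
  next
    case (Cons d r)
    with Cons.prems have "(a,b) = (c,d) \<or> (a,b) \<in> set (zip p (tl p))" by auto
    then show ?thesis
    proof
      assume "(a,b) = (c,d)" then show ?thesis using Cons by (intro exI[of _ "[]"] exI[of _ r]) auto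
    next
      assume "(a,b) \<in> set (zip p (tl p))"
      then obtain xs ys where "p = xs @ a # b # ys" using Cons.IH by blast
      then show ?thesis by (intro exI[of _ "c # xs"] exI[of _ ys]) auto
    qed
  qed
qed

lemma walk_to_path:
  assumes "\<forall>e\<in>E. 0 \<le> w e"
  shows "p \<noteq> [] \<Longrightarrow> set p \<subseteq> V \<Longrightarrow> path_edges p \<subseteq> E \<Longrightarrow>
    \<exists>p'. is_path V E (hd p) (last p) p' \<and> path_weight w p' \<le> path_weight w p"
proof (induction p rule: measure_induct_rule[of length])
  case (less p)
  show ?case
  proof (cases "distinct p")
    case True then show ?thesis using less.prems by (auto simp: is_path_def)
  next
    case False
    then obtain xs y ys zs where p: "p = xs @ [y] @ ys @ [y] @ zs"
      using not_distinct_decomp by blast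
    define p2 where "p2 = xs @ y # zs"
    have pe: "path_edges p = path_edges (xs @ [y]) \<union> path_edges (y # ys @ [y]) \<union> path_edges (y # zs)"
      using pe_append[of xs y "ys @ y # zs"] pe_append[of "y # ys" y zs] p by auto
    have pw: "path_weight w p = path_weight w (xs @ [y]) + path_weight w (y # ys @ [y]) + path_weight w (y # zs)"
      using pw_append[of w xs y "ys @ y # zs"] pw_append[of w "y # ys" y zs] p by auto
    have pe2: "path_edges p2 = path_edges (xs @ [y]) \<union> path_edges (y # zs)"
      unfolding p2_def by (rule pe_append)
    have pw2: "path_weight w p2 = path_weight w (xs @ [y]) + path_weight w (y # zs)"
      unfolding p2_def by (rule pw_append)
    have "0 \<le> path_weight w (y # ys @ [y])" using pw_nonneg[OF assms] pe less.prems by auto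
    hence w2: "path_weight w p2 \<le> path_weight w p" using pw pw2 by simp
    have "length p2 < length p" using p p2_def by simp
    moreover have "p2 \<noteq> []" "set p2 \<subseteq> set p" "path_edges p2 \<subseteq> E"
      using p p2_def pe pe2 less.prems by auto
    ultimately obtain p' where "is_path V E (hd p2) (last p2) p'" "path_weight w p' \<le> path_weight w p2"
      using less.IH less.prems by blast
    moreover have "hd p2 = hd p" using p p2_def by (cases xs) auto
    moreover have "last p2 = last p" using p p2_def by (cases zs) auto
    ultimately show ?thesis using w2 by auto
  qed
qed

lemma key:
  assumes nn: "\<forall>e\<in>E. 0 \<le> w e"
    and P: "P = xs @ a # b # ys" "set P \<subseteq> V" "path_edges P \<subseteq> E"
    and h: "hS V E w S a < ereal (w {a, b})"
  shows "hS V E w S (hd P) \<le> ereal (path_weight w P)"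
proof -
  obtain s where s: "s \<in> S" "gdist V E w a s < ereal (w {a, b})"
    using h unfolding hS_def by (auto simp: INF_less_iff)
  obtain q where q: "is_path V E a s q" "ereal (path_weight w q) < ereal (w {a, b})"
    using s(2) unfolding gdist_def by (auto simp: INF_less_iff)
  obtain q' where q': "q = a # q'" using q(1) unfolding is_path_def by (cases q) auto
  define W where "W = xs @ q"
  have W1: "path_weight w W = path_weight w (xs @ [a]) + path_weight w q"
    unfolding W_def q' by (rule pw_append)
  have W2: "path_edges W = path_edges (xs @ [a]) \<union> path_edges q"
    unfolding W_def q' by (rule pe_append)
  have P1: "path_weight w P = path_weight w (xs @ [a]) + w {a, b} + path_weight w (b # ys)"
    using pw_append[of w xs a "b # ys"] P(1) by simp
  have P2: "path_edges P = path_edges (xs @ [a]) \<union> insert {a, b} (path_edges (b # ys))"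
    using pe_append[of xs a "b # ys"] P(1) by simp
  have "0 \<le> path_weight w (b # ys)" using pw_nonneg[OF nn] P2 P(3) by auto
  hence lt: "path_weight w W < path_weight w P" using W1 P1 q(2) by simp
  have "W \<noteq> []" "set W \<subseteq> V" "path_edges W \<subseteq> E"
    using W_def q' q(1) P W2 P2 unfolding is_path_def by auto
  then obtain p' where p': "is_path V E (hd W) (last W) p'" "path_weight w p' \<le> path_weight w W"
    using walk_to_path[OF nn] by blast
  have "hd W = hd P" "last W = s" using W_def q' P(1) q(1) unfolding is_path_def
    by (cases xs; simp)+
  hence "gdist V E w (hd P) s \<le> ereal (path_weight w p')"
    using p'(1) unfolding gdist_def by (auto intro: INF_lower)
  moreover have "hS V E w S (hd P) \<le> gdist V E w (hd P) s"
    unfolding hS_def using s(1) by (rule INF_lower)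
  ultimately show ?thesis using p'(2) lt by (meson ereal_less_eq(3) less_imp_le order_trans)
qed

theorem lemma4:
  fixes V :: "'a set" and E :: "'a set set" and w :: "'a set \<Rightarrow> real"
    and S :: "'a set" and u v :: 'a and P :: "'a list"
  assumes "wgraph V E w"
    and "\<forall>e\<in>E. 0 \<le> w e"
    and "S \<subseteq> V" and "S \<noteq> {}"
    and "u \<in> V" and "v \<in> V"
    and "shortest_path V E w u v P"
    and "\<not> path_edges P \<subseteq> ES V E w S"
  shows "max (hS V E w S u) (hS V E w S v) \<le> gdist V E w u v"
proof -
  have ip: "is_path V E u v P" and d: "ereal (path_weight w P) = gdist V E w u v"
    using assms(7) unfolding shortest_path_def by auto
  obtain e where e: "e \<in> path_edges P" "e \<notin> ES V E w S" using assms(8) by blast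
  then obtain a b where ab: "e = {a, b}" "(a, b) \<in> set (zip P (tl P))"
    unfolding path_edges_def by blast
  obtain xs ys where P: "P = xs @ a # b # ys" using zip_decomp[OF ab(2)] by blast
  have sV: "set P \<subseteq> V" and pE: "path_edges P \<subseteq> E" and hd: "hd P = u" and lst: "last P = v"
    using ip unfolding is_path_def by auto
  have "a \<in> V" "b \<in> V" using sV P by auto
  have eE: "e \<in> E" using e pE by auto
  have ha: "hS V E w S a < ereal (w {a, b})"
    using e(2) \<open>a \<in> V\<close> eE ab(1) unfolding ES_def ES_v_def by (auto simp: not_le)
  have hb: "hS V E w S b < ereal (w {b, a})"
    using e(2) \<open>b \<in> V\<close> eE ab(1) unfolding ES_def ES_v_def by (auto simp: not_le insert_commute)
  have 1: "hS V E w S u \<le> gdist V E w u v"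
    using key[OF assms(2) P sV pE ha] hd d by simp
  have R: "rev P = rev ys @ b # a # rev xs" using P by simp
  have "hS V E w S (hd (rev P)) \<le> ereal (path_weight w (rev P))"
    using key[OF assms(2) R _ _ hb] sV pE by (simp add: pe_rev)
  hence 2: "hS V E w S v \<le> gdist V E w u v"
    using lst d ip by (simp add: pw_rev hd_rev is_path_def)
  show ?thesis using 1 2 by simp
qed

end
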